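(* Let $C$ be a configuration on the unlabelled complete graph $K_n$ whose distinct stack sizes are $s_1<s_2<\dots<s_N$, with $s_j$ occurring $a_j\ge1$ times. If $C$ is a period configuration of Parallel Diffusion, then $s_{j+1}-s_j\le a_j+a_{j+1}-1$ for every $1\le j\le N-1$.
   Context: Parallel Diffusion on a graph $G$: a configuration assigns an integer stack size $|v|$ to each vertex. One firing step replaces every stack size simultaneously by $|v| + \#\{u\in N(v): |u|>|v|\} - \#\{u\in N(v): |u|<|v|\}$. A period configuration is a configuration $D$ such that repeated firing starting from $D$ returns to $D$ after some positive number of steps (equivalently, $D$ lies in the eventually periodic part of the configuration sequence of some initial configuration). On the complete graph $K_n$ with unlabelled vertices, a configuration is a multiset of $n$ integers. *)

theory Defs
  imports Main "HOL-Library.Multiset"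
begin

text \<open>A configuration on the unlabelled complete graph K_n is a multiset of n integers
  (the stack sizes). One step of Parallel Diffusion: every stack of size x simultaneously
  gains one chip for each other vertex with a strictly larger stack and loses one chip for
  each other vertex with a strictly smaller stack. (A vertex never compares strictly with
  itself, so counting over the whole multiset equals counting over the neighbours.)\<close>

definition pd_fire :: "int multiset \<Rightarrow> int multiset" where
  "pd_fire C = image_mset
     (\<lambda>x. x + int (size (filter_mset (\<lambda>u. u > x) C))
            - int (size (filter_mset (\<lambda>u. u < x) C))) C"

definition pd_period_config :: "int multiset \<Rightarrow> bool" where
  "pd_period_config C \<longleftrightarrow> (\<exists>k>0. (pd_fire ^^ k) C = C)"

end

theory Submission imports Defs begin

definition cnt :: "int multiset \<Rightarrow> int \<Rightarrow> int" where
  "cnt C x = int (size (filter_mset (\<lambda>u. u > x) C)) - int (size (filter_mset (\<lambda>u. u < x) C))"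

definition gg :: "int multiset \<Rightarrow> int \<Rightarrow> int" where
  "gg C x = x + cnt C x"

definition EE :: "int multiset \<Rightarrow> int" where
  "EE C = sum_mset (image_mset (\<lambda>x. x * gg C x) C)"

lemma fire_eq: "pd_fire C = image_mset (gg C) C"
  unfolding pd_fire_def gg_def cnt_def by (simp add: algebra_simps)

lemma cnt_list: "cnt (mset xs) x = sum_list (map (\<lambda>u. sgn (u - x)) xs)"
proof (induction xs)
  case Nil then show ?case by (simp add: cnt_def)
next
  case (Cons a xs)
  then show ?case by (auto simp: cnt_def sgn_if)
qed

lemma cnt_idx: "cnt (mset xs) x = (\<Sum>j<length xs. sgn (xs!j - x))"
  by (simp add: cnt_list sum_list_sum_nth atLeast0LessThan)

lemma EE_idx: "EE (mset xs) = (\<Sum>i<length xs. xs!i * (xs!i + (\<Sum>j<length xs. sgn (xs!j - xs!i))))"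
proof -
  have "EE (mset xs) = sum_list (map (\<lambda>x. x * gg (mset xs) x) xs)"
    unfolding EE_def by (simp add: sum_mset_sum_list flip: mset_map)
  also have "\<dots> = (\<Sum>i<length xs. xs!i * gg (mset xs) (xs!i))"
    by (simp add: sum_list_sum_nth atLeast0LessThan)
  finally show ?thesis by (simp add: gg_def cnt_idx)
qed

lemma algebra_key:
  fixes X Y :: "nat \<Rightarrow> int"
  assumes Y: "\<And>i. Y i = X i + (\<Sum>j<n. sgn (X j - X i))"
  shows "2 * ((\<Sum>i<n. Y i * (Y i + (\<Sum>j<n. sgn (Y j - Y i)))) - (\<Sum>i<n. X i * Y i))
     = (\<Sum>i<n. \<Sum>j<n. (Y i - Y j) * (sgn (X j - X i) + sgn (Y j - Y i)))"
proof -
  define s where "s i j = sgn (X j - X i) + sgn (Y j - Y i)" for i j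
  have anti: "s j i = - s i j" for i j unfolding s_def by (simp add: sgn_if)
  have "(\<Sum>i<n. Y i * (Y i + (\<Sum>j<n. sgn (Y j - Y i)))) - (\<Sum>i<n. X i * Y i)
      = (\<Sum>i<n. Y i * ((Y i - X i) + (\<Sum>j<n. sgn (Y j - Y i))))"
    by (simp add: sum_subtractf[symmetric] algebra_simps)
  also have "\<dots> = (\<Sum>i<n. Y i * (\<Sum>j<n. s i j))"
    by (simp add: Y s_def sum.distrib)
  also have "\<dots> = (\<Sum>i<n. \<Sum>j<n. Y i * s i j)"
    by (simp add: sum_distrib_left)
  finally have e1: "(\<Sum>i<n. Y i * (Y i + (\<Sum>j<n. sgn (Y j - Y i)))) - (\<Sum>i<n. X i * Y i)
      = (\<Sum>i<n. \<Sum>j<n. Y i * s i j)" .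
  have "(\<Sum>i<n. \<Sum>j<n. Y i * s i j) = (\<Sum>i<n. \<Sum>j<n. - (Y j * s i j))"
  proof -
    have "(\<Sum>i<n. \<Sum>j<n. Y i * s i j) = (\<Sum>j<n. \<Sum>i<n. Y i * s i j)"
      by (rule sum.swap)
    also have "\<dots> = (\<Sum>i<n. \<Sum>j<n. - (Y j * s i j))"
    proof (rule sum.cong[OF refl], rule sum.cong[OF refl])
      fix i j show "Y j * s j i = - (Y j * s i j)" using anti[of i j] by simp
    qed
    finally show ?thesis .
  qed
  then have e2: "(\<Sum>i<n. \<Sum>j<n. Y i * s i j) = (\<Sum>i<n. \<Sum>j<n. - (Y j * s i j))" .
  have "2 * (\<Sum>i<n. \<Sum>j<n. Y i * s i j) = (\<Sum>i<n. \<Sum>j<n. Y i * s i j) + (\<Sum>i<n. \<Sum>j<n. - (Y j * s i j))"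
    using e2 by simp
  also have "\<dots> = (\<Sum>i<n. \<Sum>j<n. (Y i - Y j) * s i j)"
    by (simp add: sum.distrib[symmetric] algebra_simps)
  finally show ?thesis using e1 by (simp add: s_def)
qed

lemma term_nonpos:
  fixes a b c d :: int
  shows "(c - d) * (sgn (b - a) + sgn (d - c)) \<le> 0"
  by (cases "b < a"; cases "b = a"; cases "d < c"; cases "d = c"; simp add: sgn_if)

lemma double_sum_le:
  fixes T :: "nat \<Rightarrow> nat \<Rightarrow> int"
  assumes "\<And>i j. T i j \<le> 0"
  shows "(\<Sum>i<n. \<Sum>j<n. T i j) \<le> 0"
  using assms by (meson sum_nonpos)

lemma double_sum_lt:
  fixes T :: "nat \<Rightarrow> nat \<Rightarrow> int"
  assumes "\<And>i j. T i j \<le> 0" and "i0 < n" "j0 < n" "T i0 j0 < 0"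
  shows "(\<Sum>i<n. \<Sum>j<n. T i j) < 0"
proof -
  have "(\<Sum>j<n. T i0 j) \<le> T i0 j0"
  proof -
    have "(\<Sum>j<n. - T i0 j) \<ge> - T i0 j0"
      by (rule member_le_sum) (use assms in auto)
    then show ?thesis by (simp add: sum_negf)
  qed
  moreover have "(\<Sum>i<n. \<Sum>j<n. T i j) \<le> (\<Sum>j<n. T i0 j)"
  proof -
    have "(\<Sum>i<n. - (\<Sum>j<n. T i j)) \<ge> - (\<Sum>j<n. T i0 j)"
      by (rule member_le_sum) (use assms(2) in \<open>auto intro: sum_nonpos assms(1)\<close>)
    then show ?thesis by (simp add: sum_negf)
  qed
  ultimately show ?thesis using assms(4) by linarith
qed

lemma EE_step:
  "EE (pd_fire D) \<le> EE D \<and>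
   (EE (pd_fire D) = EE D \<longrightarrow> (\<forall>a\<in>#D. \<forall>b\<in>#D. a < b \<longrightarrow> gg D b \<le> gg D a))"
proof -
  obtain xs where D: "D = mset xs" by (metis ex_mset)
  define n where "n = length xs"
  define X where "X i = xs ! i" for i
  define Y where "Y i = X i + (\<Sum>j<n. sgn (X j - X i))" for i
  have gY: "gg D (X i) = Y i" for i unfolding Y_def gg_def D cnt_idx X_def n_def ..
  define ys where "ys = map (gg D) xs"
  have F: "pd_fire D = mset ys" unfolding fire_eq ys_def D by simp
  have ysn: "length ys = n" "\<And>i. i < n \<Longrightarrow> ys ! i = Y i"
    unfolding ys_def n_def using gY by (auto simp: X_def)
  have E1: "EE D = (\<Sum>i<n. X i * Y i)"
    unfolding D EE_idx Y_def X_def n_def ..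
  have E2: "EE (pd_fire D) = (\<Sum>i<n. Y i * (Y i + (\<Sum>j<n. sgn (Y j - Y i))))"
    unfolding F EE_idx ysn(1) by (intro sum.cong refl) (simp add: ysn(2))
  have key: "2 * (EE (pd_fire D) - EE D)
     = (\<Sum>i<n. \<Sum>j<n. (Y i - Y j) * (sgn (X j - X i) + sgn (Y j - Y i)))"
    unfolding E1 E2 by (rule algebra_key) (simp add: Y_def)
  have le: "EE (pd_fire D) \<le> EE D"
    using double_sum_le[of "\<lambda>i j. (Y i - Y j) * (sgn (X j - X i) + sgn (Y j - Y i))" n]
      term_nonpos key by simp
  moreover have "\<forall>a\<in>#D. \<forall>b\<in>#D. a < b \<longrightarrow> gg D b \<le> gg D a" if eq: "EE (pd_fire D) = EE D"
  proof (intro ballI impI, rule ccontr)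
    fix a b assume a: "a \<in># D" and b: "b \<in># D" and ab: "a < b" and c: "\<not> gg D b \<le> gg D a"
    obtain i where i: "i < n" "X i = a" using a unfolding D X_def n_def by (auto simp: in_set_conv_nth)
    obtain j where j: "j < n" "X j = b" using b unfolding D X_def n_def by (auto simp: in_set_conv_nth)
    have "Y i < Y j" using c i j gY by auto
    then have "(Y i - Y j) * (sgn (X j - X i) + sgn (Y j - Y i)) < 0"
      using ab i j by simp
    then have "(\<Sum>i<n. \<Sum>j<n. (Y i - Y j) * (sgn (X j - X i) + sgn (Y j - Y i))) < 0"
      by (intro double_sum_lt[OF _ i(1) j(1)]) (rule term_nonpos)
    then show False using key eq by simp
  qed
  ultimately show ?thesis by blast
qed


lemma period_antitone:
  assumes "pd_period_config C"
  shows "\<exists>D. pd_fire D = C \<and> (\<forall>a\<in>#D. \<forall>b\<in>#D. a < b \<longrightarrow> gg D b \<le> gg D a)"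
proof -
  obtain k where k: "k > 0" "(pd_fire ^^ k) C = C" using assms unfolding pd_period_config_def by blast
  have mono: "EE ((pd_fire ^^ i) C) \<le> EE C" for i
  proof (induction i)
    case 0 then show ?case by simp
  next
    case (Suc i)
    have "EE ((pd_fire ^^ Suc i) C) = EE (pd_fire ((pd_fire ^^ i) C))" by simp
    also have "\<dots> \<le> EE ((pd_fire ^^ i) C)" using EE_step by blast
    finally show ?case using Suc by linarith
  qed
  define D where "D = (pd_fire ^^ (k - 1)) C"
  have FD: "pd_fire D = C"
  proof -
    have "pd_fire D = (pd_fire ^^ Suc (k - 1)) C" unfolding D_def by simp
    also have "Suc (k - 1) = k" using k(1) by simp
    finally show ?thesis using k(2) by simp
  qed
  have "EE (pd_fire D) = EE D" using mono[of "k - 1"] EE_step[of D] FD unfolding D_def by simp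
  then show ?thesis using EE_step[of D] FD by blast
qed

lemma count_img_ge:
  assumes "x \<in># D"
  shows "count D x \<le> count (image_mset f D) (f x)"
proof -
  have "count (image_mset f D) (f x) = (\<Sum>y\<in>f -` {f x} \<inter> set_mset D. count D y)"
    by (rule count_image_mset)
  moreover have "count D x \<le> (\<Sum>y\<in>f -` {f x} \<inter> set_mset D. count D y)"
    by (rule member_le_sum) (use assms in auto)
  ultimately show ?thesis by simp
qed

lemma gap_lemma:
  assumes anti: "\<forall>a\<in>#D. \<forall>b\<in>#D. a < b \<longrightarrow> gg D b \<le> gg D a"
    and C: "C = image_mset (gg D) D"
    and v: "v \<in># C" and w: "w \<in># C" and vw: "v < w"
    and nb: "\<forall>u\<in>#C. \<not> (v < u \<and> u < w)"
  shows "w - v \<le> int (count C v) + int (count C w) - 1"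
proof -
  let ?g = "gg D"
  obtain p where p: "p \<in># D" "?g p = v" using v C by auto
  obtain q where q: "q \<in># D" "?g q = w" using w C by auto
  have cover: "?g x \<le> v \<or> ?g x \<ge> w" if "x \<in># D" for x
    using nb that C by force
  define H where "H = {x \<in> set_mset D. ?g x \<ge> w}"
  define L where "L = {x \<in> set_mset D. ?g x \<le> v}"
  have sep: "x < y" if "x \<in> H" "y \<in> L" for x y
  proof (rule ccontr)
    assume "\<not> x < y"
    then have "y < x \<or> y = x" by auto
    then show False
    proof
      assume "y < x" then have "?g x \<le> ?g y" using anti that unfolding H_def L_def by auto
      then show False using that vw unfolding H_def L_def by auto
    next
      assume "y = x" then show False using that vw unfolding H_def L_def by auto
    qed
  qed
  have finH: "finite H" "H \<noteq> {}" unfolding H_def using q by auto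
  have finL: "finite L" "L \<noteq> {}" unfolding L_def using p by auto
  define M where "M = Max H"
  define m where "m = Min L"
  have MH: "M \<in> H" unfolding M_def using finH by simp
  have mL: "m \<in> L" unfolding m_def using finL by simp
  have Mm: "M < m" using sep MH mL by simp
  have between: "\<not> (M < u \<and> u < m)" if "u \<in># D" for u
  proof
    assume u: "M < u \<and> u < m"
    from cover[OF that] show False
    proof
      assume "?g u \<le> v" then have "u \<in> L" using that unfolding L_def by simp
      then have "m \<le> u" unfolding m_def using finL by simp
      then show False using u by simp
    next
      assume "?g u \<ge> w" then have "u \<in> H" using that unfolding H_def by simp
      then have "u \<le> M" unfolding M_def using finH by simp
      then show False using u by simp
    qed
  qed
  have gm: "?g m = v"
  proof -
    have "p \<in> L" using p unfolding L_def by simp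
    then have "m \<le> p" unfolding m_def using finL by simp
    then have "?g p \<le> ?g m" using anti p mL unfolding L_def by (cases "m = p") auto
    then show ?thesis using mL p unfolding L_def by simp
  qed
  have gM: "?g M = w"
  proof -
    have "q \<in> H" using q unfolding H_def by simp
    then have "q \<le> M" unfolding M_def using finH by simp
    then have "?g M \<le> ?g q" using anti q MH unfolding H_def by (cases "M = q") auto
    then show ?thesis using MH q unfolding H_def by simp
  qed
  have f1: "filter_mset (\<lambda>u. u > M) D = filter_mset (\<lambda>u. u > m) D + filter_mset (\<lambda>u. u = m) D"
  proof (rule multiset_eqI)
    fix x show "count (filter_mset (\<lambda>u. u > M) D) x = count (filter_mset (\<lambda>u. u > m) D + filter_mset (\<lambda>u. u = m) D) x"
      using between[of x] Mm by (cases "x \<in># D") (auto simp: not_in_iff)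
  qed
  have f2: "filter_mset (\<lambda>u. u < m) D = filter_mset (\<lambda>u. u < M) D + filter_mset (\<lambda>u. u = M) D"
  proof (rule multiset_eqI)
    fix x show "count (filter_mset (\<lambda>u. u < m) D) x = count (filter_mset (\<lambda>u. u < M) D + filter_mset (\<lambda>u. u = M) D) x"
      using between[of x] Mm by (cases "x \<in># D") (auto simp: not_in_iff)
  qed
  have s1: "size (filter_mset (\<lambda>u. u > M) D) = size (filter_mset (\<lambda>u. u > m) D) + count D m"
    unfolding f1 by (simp add: filter_eq_replicate_mset)
  have s2: "size (filter_mset (\<lambda>u. u < m) D) = size (filter_mset (\<lambda>u. u < M) D) + count D M"
    unfolding f2 by (simp add: filter_eq_replicate_mset)
  have diff: "?g m - ?g M = (m - M) - int (count D m) - int (count D M)"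
    unfolding gg_def cnt_def using s1 s2 by simp
  have cm: "count D m \<le> count C v" unfolding C gm[symmetric] by (rule count_img_ge) (use mL L_def in auto)
  have cM: "count D M \<le> count C w" unfolding C gM[symmetric] by (rule count_img_ge) (use MH H_def in auto)
  show ?thesis using diff gm gM cm cM Mm by linarith
qed


theorem mainTheorem4:
  fixes C :: "int multiset"
  assumes "pd_period_config C"
  defines "s \<equiv> sorted_list_of_set (set_mset C)"
  shows "\<forall>j. j + 1 < length s \<longrightarrow>
           s ! (j + 1) - s ! j \<le> int (count C (s ! j)) + int (count C (s ! (j + 1))) - 1"
proof (intro allI impI)
  fix j assume j: "j + 1 < length s"
  obtain D where FD: "pd_fire D = C" and anti: "\<forall>a\<in>#D. \<forall>b\<in>#D. a < b \<longrightarrow> gg D b \<le> gg D a"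
    using period_antitone[OF assms(1)] by blast
  have ss: "sorted_wrt (<) s" and sets: "set s = set_mset C"
    unfolding s_def by auto
  have srt: "sorted s" unfolding s_def by simp
  have v: "s ! j \<in># C" using j sets by (metis Suc_eq_plus1 Suc_lessD nth_mem)
  have w: "s ! (j + 1) \<in># C" using j sets by (metis nth_mem)
  have vw: "s ! j < s ! (j + 1)" using ss j by (simp add: sorted_wrt_nth_less)
  have nb: "\<forall>u\<in>#C. \<not> (s ! j < u \<and> u < s ! (j + 1))"
  proof (intro ballI notI)
    fix u assume u: "u \<in># C" and b: "s ! j < u \<and> u < s ! (j + 1)"
    obtain k where k: "k < length s" "s ! k = u" using u sets by (metis in_set_conv_nth)
    show False
    proof (cases "k \<le> j")
      case True then have "s ! k \<le> s ! j" using srt j by (simp add: sorted_nth_mono)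
      then show False using b k by simp
    next
      case False then have "s ! (j + 1) \<le> s ! k" using srt k sorted_nth_mono[of s "j+1" k] by simp
      then show False using b k by simp
    qed
  qed
  show "s ! (j + 1) - s ! j \<le> int (count C (s ! j)) + int (count C (s ! (j + 1))) - 1"
    by (rule gap_lemma[OF anti _ v w vw nb]) (simp add: FD[symmetric] fire_eq)
qed

end
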